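(* Let $\mathcal{D}=\{(\mathbf{x}_1,y_1),\ldots,(\mathbf{x}_n,y_n)\}$, $\mathbf{x}_i\in\mathbb{R}^d$, $1\le m<n$, $\mathcal{D}_m=\{(\mathbf{x}_{n-m+1},y_{n-m+1}),\ldots,(\mathbf{x}_n,y_n)\}$. Let $\ell$ be a convex loss, differentiable everywhere, twice differentiable in its first argument, and $\lambda>0$. For a dataset $S$ let $L(\mathbf{w};S)=\sum_{(\mathbf{x},y)\in S}\ell(\mathbf{w}^\top\mathbf{x},y)+\frac{\lambda|S|}{2}\|\mathbf{w}\|_2^2$. Let $\mathbf{w}^*=\arg\min L(\cdot;\mathcal{D})$, $$\Delta^{(m)}=m\lambda\mathbf{w}^*+\sum_{j=n-m+1}^n\nabla\ell((\mathbf{w}^* )^\top\mathbf{x}_j,y_j),\quad H^{(m)}_{\mathbf{w}^*}=\nabla^2L(\mathbf{w}^*;\mathcal{D}\setminus\mathcal{D}_m),\quad \mathbf{w}^{(-m)}=\mathbf{w}^*+\big[H^{(m)}_{\mathbf{w}^*}\big]^{-1}\Delta^{(m)}.$$ Suppose that $\|\nabla\ell(\mathbf{w}^\top\mathbf{x}_i,y_i)\|_2\le C$ for all $(\mathbf{x}_i,y_i)\in\mathcal{D}$ and $\mathbf{w}\in\mathbb{R}^d$, that $\ell''$ is $\gamma$-Lipschitz, and that $\|\mathbf{x}_i\|_2\le1$ for all $i$. Then $$\|\nabla L(\mathbf{w}^{(-m)};\mathcal{D}\setminus\mathcal{D}_m)\|_2\le\gamma(n-m)\Big\|\big[H^{(m)}_{\mathbf{w}^*}\big]^{-1}\Delta^{(m)}\Big\|_2^2\le\frac{4\gamma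 m^2C^2}{\lambda^2(n-m)}.$$
   Context: Gradients/Hessians are with respect to $\mathbf{w}$; $\ell''$ is the second derivative of $\ell$ in its first argument. *)

theory Defs
  imports "HOL-Analysis.Analysis"
begin

definition gradient :: "(real^'d \<Rightarrow> real) \<Rightarrow> real^'d \<Rightarrow> real^'d" where
  "gradient f w = (THE g. (f has_derivative (\<lambda>h. g \<bullet> h)) (at w))"

definition hessian :: "(real^'d \<Rightarrow> real) \<Rightarrow> real^'d \<Rightarrow> real^'d^'d" where
  "hessian f w = (THE H. ((gradient f) has_derivative (\<lambda>h. H *v h)) (at w))"

definition regloss :: "(real \<Rightarrow> real \<Rightarrow> real) \<Rightarrow> real \<Rightarrow> (nat \<Rightarrow> real^'d) \<Rightarrow> (nat \<Rightarrow> real)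
    \<Rightarrow> nat set \<Rightarrow> real^'d \<Rightarrow> real" where
  "regloss l lam x y S w = (\<Sum>i\<in>S. l (w \<bullet> x i) (y i)) + lam * real (card S) / 2 * (norm w)^2"

end

theory Submission imports Defs begin

lemma grad_unique:
  fixes f :: "real^'d \<Rightarrow> real"
  assumes "(f has_derivative (\<lambda>h. g \<bullet> h)) (at w)"
  shows "gradient f w = g"
  unfolding gradient_def
proof (rule the_equality)
  show "(f has_derivative (\<lambda>h. g \<bullet> h)) (at w)" by fact
  fix g' assume "(f has_derivative (\<lambda>h. g' \<bullet> h)) (at w)"
  then have "(\<lambda>h. g' \<bullet> h) = (\<lambda>h. g \<bullet> h)" using assms has_derivative_unique by blast
  then have "g' \<bullet> (g' - g) = g \<bullet> (g' - g)" by metis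
  then have "(g' - g) \<bullet> (g' - g) = 0" by (simp add: inner_diff_left)
  then show "g' = g" by simp
qed

lemma hess_unique:
  fixes f :: "real^'d \<Rightarrow> real"
  assumes "(gradient f has_derivative (\<lambda>h. H *v h)) (at w)"
  shows "hessian f w = H"
  unfolding hessian_def
proof (rule the_equality)
  show "(gradient f has_derivative (\<lambda>h. H *v h)) (at w)" by fact
  fix H' assume "(gradient f has_derivative (\<lambda>h. H' *v h)) (at w)"
  then have "(\<lambda>h. H' *v h) = (\<lambda>h. H *v h)" using assms has_derivative_unique by blast
  then show "H' = H" by (metis matrix_eq)
qed

lemma fi_deriv:
  fixes x :: "real^'d"
  assumes d1: "\<And>a. ((\<lambda>t. l t) has_real_derivative l1 a) (at a)"
  shows "((\<lambda>v. l (v \<bullet> x)) has_derivative (\<lambda>h. (l1 (w \<bullet> x) *\<^sub>R x) \<bullet> h)) (at w)"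
proof -
  have 1: "((\<lambda>v. v \<bullet> x) has_derivative (\<lambda>h. h \<bullet> x)) (at w)"
    by (auto intro!: derivative_eq_intros)
  have 2: "(l has_derivative (\<lambda>h. l1 (w \<bullet> x) * h)) (at (w \<bullet> x))"
    using d1[of "w \<bullet> x"] by (simp add: has_field_derivative_def)
  have "((\<lambda>v. l (v \<bullet> x)) has_derivative (\<lambda>h. l1 (w \<bullet> x) * (h \<bullet> x))) (at w)"
    using has_derivative_compose[OF 1 2] by simp
  then show ?thesis by (simp add: inner_commute)
qed

lemma l1_deriv:
  fixes x :: "real^'d"
  assumes d2: "\<And>a. ((\<lambda>t. l1 t) has_real_derivative l2 a) (at a)"
  shows "((\<lambda>v. l1 (v \<bullet> x) *\<^sub>R x) has_derivative (\<lambda>h. (l2 (w \<bullet> x) * (h \<bullet> x)) *\<^sub>R x)) (at w)"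
proof -
  have 1: "((\<lambda>v. v \<bullet> x) has_derivative (\<lambda>h. h \<bullet> x)) (at w)"
    by (auto intro!: derivative_eq_intros)
  have 2: "(l1 has_derivative (\<lambda>h. l2 (w \<bullet> x) * h)) (at (w \<bullet> x))"
    using d2[of "w \<bullet> x"] by (simp add: has_field_derivative_def)
  have "((\<lambda>v. l1 (v \<bullet> x)) has_derivative (\<lambda>h. l2 (w \<bullet> x) * (h \<bullet> x))) (at w)"
    using has_derivative_compose[OF 1 2] by simp
  then show ?thesis by (auto intro!: derivative_eq_intros)
qed

lemma mono_l1:
  assumes convex: "convex_on UNIV f"
    and d1: "\<And>a. (f has_real_derivative f1 a) (at a)"
    and "a \<le> b"
  shows "f1 a \<le> f1 b"
proof -
  have "f b - f a \<ge> f1 a * (b - a)"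
    by (rule convex_on_imp_above_tangent[OF convex]) (auto simp: d1)
  moreover have "f a - f b \<ge> f1 b * (a - b)"
    by (rule convex_on_imp_above_tangent[OF convex]) (auto simp: d1)
  ultimately have "(f1 b - f1 a) * (b - a) \<ge> 0" by (simp add: algebra_simps)
  then show ?thesis using assms(3)
    by (cases "a = b") (auto simp: zero_le_mult_iff)
qed

lemma l2_nonneg:
  assumes mono: "\<And>a b. a \<le> b \<Longrightarrow> f1 a \<le> f1 b"
    and d2: "(f1 has_real_derivative f2) (at a)"
  shows "f2 \<ge> 0"
proof (rule ccontr)
  assume "\<not> f2 \<ge> 0"
  then obtain d where "d > 0" "\<And>h. h > 0 \<Longrightarrow> h < d \<Longrightarrow> f1 a > f1 (a + h)"
    using DERIV_neg_dec_right[OF d2] by force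
  then have "f1 a > f1 (a + d/2)" by auto
  moreover have "f1 a \<le> f1 (a + d/2)" using mono \<open>d > 0\<close> by auto
  ultimately show False by simp
qed

lemma taylor1:
  assumes d2: "\<And>a. (f1 has_real_derivative f2 a) (at a)"
    and lip: "\<And>a a'. \<bar>f2 a - f2 a'\<bar> \<le> gam * \<bar>a - a'\<bar>"
  shows "\<bar>f1 b - f1 a - f2 a * (b - a)\<bar> \<le> gam * (b - a)^2"
proof -
  have g0: "gam \<ge> 0"
  proof -
    have "0 \<le> gam * \<bar>(1::real) - 0\<bar>" using lip[of 1 0] by linarith
    then show ?thesis by simp
  qed
  have key: "\<bar>f1 b - f1 a - f2 a * (b - a)\<bar> \<le> gam * \<bar>b - a\<bar> * \<bar>b - a\<bar>"
    if uv: "u < v" and ab: "(a = u \<and> b = v) \<or> (a = v \<and> b = u)" for u v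
  proof -
    obtain z where z: "u < z" "z < v" "f1 v - f1 u = (v - u) * f2 z"
      using MVT2[OF uv, of f1 f2] d2 by blast
    have "f1 b - f1 a - f2 a * (b - a) = (f2 z - f2 a) * (b - a)" using z ab by (auto simp: algebra_simps)
    then have "\<bar>f1 b - f1 a - f2 a * (b - a)\<bar> = \<bar>f2 z - f2 a\<bar> * \<bar>b - a\<bar>" by (simp add: abs_mult)
    also have "\<dots> \<le> gam * \<bar>z - a\<bar> * \<bar>b - a\<bar>" by (intro mult_right_mono lip) auto
    also have "\<bar>z - a\<bar> \<le> \<bar>b - a\<bar>" using z ab by auto
    then have "gam * \<bar>z - a\<bar> * \<bar>b - a\<bar> \<le> gam * \<bar>b - a\<bar> * \<bar>b - a\<bar>"
      using g0 by (intro mult_right_mono mult_left_mono) auto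
    finally show ?thesis .
  qed
  have "\<bar>f1 b - f1 a - f2 a * (b - a)\<bar> \<le> gam * \<bar>b - a\<bar> * \<bar>b - a\<bar>"
  proof (cases a b rule: linorder_cases)
    case less then show ?thesis using key[of a b] by auto
  next
    case equal then show ?thesis by simp
  next
    case greater then show ?thesis using key[of b a] by auto
  qed
  then show ?thesis by (simp add: power2_eq_square mult.assoc)
qed

theorem theorem4:
  fixes l :: "real \<Rightarrow> real \<Rightarrow> real"
    and l1 l2 :: "real \<Rightarrow> real \<Rightarrow> real"
    and x :: "nat \<Rightarrow> real^'d" and y :: "nat \<Rightarrow> real"
    and n m :: nat and lam gam C :: real and wstar :: "real^'d"
  assumes m_pos: "1 \<le> m" and m_lt: "m < n"
    and convex: "\<And>b. convex_on UNIV (\<lambda>a. l a b)"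
    and diff: "\<And>p. (\<lambda>q. l (fst q) (snd q)) differentiable (at p)"
    and d1: "\<And>a b. ((\<lambda>t. l t b) has_real_derivative l1 a b) (at a)"
    and d2: "\<And>a b. ((\<lambda>t. l1 t b) has_real_derivative l2 a b) (at a)"
    and lam_pos: "lam > 0"
    and wstar_min: "\<And>w. regloss l lam x y {1..n} wstar \<le> regloss l lam x y {1..n} w"
    and grad_bd: "\<And>i w. i \<in> {1..n} \<Longrightarrow> norm (gradient (\<lambda>v. l (v \<bullet> x i) (y i)) w) \<le> C"
    and lip: "\<And>a a' b. \<bar>l2 a b - l2 a' b\<bar> \<le> gam * \<bar>a - a'\<bar>"
    and x_bd: "\<And>i. i \<in> {1..n} \<Longrightarrow> norm (x i) \<le> 1"
  shows "let Delta = (real m * lam) *\<^sub>R wstar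
                   + (\<Sum>j\<in>{n-m+1..n}. gradient (\<lambda>v. l (v \<bullet> x j) (y j)) wstar);
             H = hessian (regloss l lam x y {1..n-m}) wstar;
             wm = wstar + matrix_inv H *v Delta
         in norm (gradient (regloss l lam x y {1..n-m}) wm)
              \<le> gam * real (n - m) * (norm (matrix_inv H *v Delta))^2
          \<and> gam * real (n - m) * (norm (matrix_inv H *v Delta))^2
              \<le> 4 * gam * (real m)^2 * C^2 / (lam^2 * real (n - m))"
proof -
  define S where "S = {1..n-m}"
  define T where "T = {n-m+1..n}"
  define c where "c = lam * real (n - m)"
  define g where "g = (\<lambda>w i. l1 (w \<bullet> x i) (y i) *\<^sub>R x i)"
  define Delta where "Delta = (real m * lam) *\<^sub>R wstar
                   + (\<Sum>j\<in>{n-m+1..n}. gradient (\<lambda>v. l (v \<bullet> x j) (y j)) wstar)"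
  define H where "H = hessian (regloss l lam x y {1..n-m}) wstar"
  define v where "v = matrix_inv H *v Delta"
  define wm where "wm = wstar + v"
  have c_pos: "c > 0" using lam_pos m_lt by (simp add: c_def)
  have gam0: "gam \<ge> 0"
  proof -
    have "0 \<le> gam * \<bar>(1::real) - 0\<bar>" using lip[of 1 _ 0] by (meson abs_ge_zero order_trans)
    then show ?thesis by simp
  qed
  have gi: "\<And>i w. gradient (\<lambda>v. l (v \<bullet> x i) (y i)) w = g w i"
    unfolding g_def by (rule grad_unique, rule fi_deriv, rule d1)
  have dL: "(regloss l lam x y A has_derivative
      (\<lambda>h. ((\<Sum>i\<in>A. g w i) + (lam * real (card A)) *\<^sub>R w) \<bullet> h)) (at w)" if "finite A" for A w
  proof -
    have eq: "regloss l lam x y A = (\<lambda>w. (\<Sum>i\<in>A. l (w \<bullet> x i) (y i)) + lam * real (card A) / 2 * (w \<bullet> w))"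
      by (rule ext) (simp add: regloss_def power2_norm_eq_inner)
    have 1: "((\<lambda>w. \<Sum>i\<in>A. l (w \<bullet> x i) (y i)) has_derivative (\<lambda>h. \<Sum>i\<in>A. g w i \<bullet> h)) (at w)"
      unfolding g_def by (intro has_derivative_sum fi_deriv d1)
    have 2: "((\<lambda>w. lam * real (card A) / 2 * (w \<bullet> w)) has_derivative
       (\<lambda>h. lam * real (card A) / 2 * (h \<bullet> w + w \<bullet> h))) (at w)"
      by (auto intro!: derivative_eq_intros)
    show ?thesis unfolding eq
      by (rule has_derivative_eq_rhs[OF has_derivative_add[OF 1 2]])
        (auto simp: inner_add_left inner_add_right inner_sum_left inner_sum_right inner_commute algebra_simps)
  qed
  have gradL: "gradient (regloss l lam x y A) w = (\<Sum>i\<in>A. g w i) + (lam * real (card A)) *\<^sub>R w"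
    if "finite A" for A w
    by (rule grad_unique, rule dL[OF that])
  have full0: "(\<Sum>i\<in>{1..n}. g wstar i) + (lam * real n) *\<^sub>R wstar = 0"
  proof -
    let ?G = "(\<Sum>i\<in>{1..n}. g wstar i) + (lam * real n) *\<^sub>R wstar"
    have "(\<lambda>h. ?G \<bullet> h) = (\<lambda>h. 0)"
      using differential_zero_maxmin[of wstar UNIV, OF _ _ dL[of "{1..n}" wstar]] wstar_min by auto
    then have "?G \<bullet> ?G = 0" by metis
    then show ?thesis by simp
  qed
  have split: "{1..n} = S \<union> T" "S \<inter> T = {}" using m_lt by (auto simp: S_def T_def)
  have cardS: "card S = n - m" and cardT: "card T = m" using m_lt by (auto simp: S_def T_def)
  have Delta_eq: "Delta = (real m * lam) *\<^sub>R wstar + (\<Sum>j\<in>T. g wstar j)"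
    by (simp add: Delta_def T_def gi)
  define GS where "GS = (\<lambda>w. (\<Sum>i\<in>S. g w i) + c *\<^sub>R w)"
  have fS: "finite S" by (simp add: S_def)
  have "gradient (regloss l lam x y S) = GS"
    by (rule ext) (simp only: gradL[OF fS] GS_def c_def cardS)
  then have gradS: "gradient (regloss l lam x y {1..n-m}) = GS" by (simp only: S_def)
  have GS_star: "GS wstar = - Delta"
  proof -
    have "GS wstar + Delta = (\<Sum>i\<in>{1..n}. g wstar i) + (lam * (real (n-m) + real m)) *\<^sub>R wstar"
    proof -
      have su: "(\<Sum>i\<in>{1..n}. g wstar i) = (\<Sum>i\<in>S. g wstar i) + (\<Sum>i\<in>T. g wstar i)"
        unfolding split(1) by (rule sum.union_disjoint) (auto simp: S_def T_def)
      show ?thesis unfolding GS_def Delta_eq c_def su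
        by (simp add: algebra_simps scaleR_add_left)
    qed
    also have "real (n-m) + real m = real n" using m_lt by simp
    finally show ?thesis using full0 by (simp add: eq_neg_iff_add_eq_0 add.commute)
  qed
  define Lin where "Lin = (\<lambda>h. (\<Sum>i\<in>S. (l2 (wstar \<bullet> x i) (y i) * (h \<bullet> x i)) *\<^sub>R x i) + c *\<^sub>R h)"
  have dGS: "(GS has_derivative Lin) (at wstar)"
    unfolding GS_def Lin_def g_def
    by (intro has_derivative_add has_derivative_sum l1_deriv d2 has_derivative_scaleR_right has_derivative_ident)
  have blin: "bounded_linear Lin" using dGS by (rule has_derivative_bounded_linear)
  have Hdef: "H = matrix Lin"
    unfolding H_def by (rule hess_unique) (simp only: gradS matrix_vector_mul(3)[OF blin] dGS)
  have HLin: "\<And>h. H *v h = Lin h" using blin unfolding Hdef by (metis matrix_vector_mul(3))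
  have l2pos: "\<And>a b. l2 a b \<ge> 0"
  proof -
    fix a b
    have mono: "\<And>u w. u \<le> w \<Longrightarrow> l1 u b \<le> l1 w b"
      by (rule mono_l1[where f="\<lambda>t. l t b" and ?f1.0="\<lambda>a. l1 a b", OF convex d1])
    show "l2 a b \<ge> 0"
      by (rule l2_nonneg[where ?f1.0="\<lambda>t. l1 t b", OF mono d2])
  qed
  have Lin_lb: "c * norm h \<le> norm (Lin h)" for h
  proof -
    have "h \<bullet> Lin h = (\<Sum>i\<in>S. l2 (wstar \<bullet> x i) (y i) * (h \<bullet> x i)^2) + c * (h \<bullet> h)"
      by (simp add: Lin_def inner_add_right inner_sum_right power2_eq_square algebra_simps)
    also have "\<dots> \<ge> c * (h \<bullet> h)" using l2pos by (simp add: sum_nonneg)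
    finally have "c * (norm h)^2 \<le> norm h * norm (Lin h)"
      using norm_cauchy_schwarz[of h "Lin h"] by (simp add: power2_norm_eq_inner)
    then show ?thesis
      by (cases "h = 0") (auto simp: power2_eq_square mult.assoc[symmetric])
  qed
  have inv: "H ** matrix_inv H = mat 1"
  proof -
    have "\<forall>h. H *v h = 0 \<longrightarrow> h = 0"
    proof (intro allI impI)
      fix h assume "H *v h = 0"
      then have "c * norm h \<le> 0" using Lin_lb[of h] HLin by simp
      then show "h = 0" using c_pos by (simp add: mult_le_0_iff)
    qed
    then have "invertible H" using matrix_left_invertible_ker invertible_left_inverse by blast
    then show ?thesis unfolding invertible_def matrix_inv_def by (metis (mono_tags, lifting) someI_ex)
  qed
  have LinV: "Lin v = Delta"
    using inv HLin[of v] unfolding v_def by (metis matrix_vector_mul_assoc matrix_vector_mul_lid)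
  have part1: "norm (GS wm) \<le> gam * real (n - m) * (norm v)^2"
  proof -
    have "GS wm = GS wm - GS wstar - Lin v" using GS_star LinV by simp
    also have "\<dots> = (\<Sum>i\<in>S. (l1 (wm \<bullet> x i) (y i) - l1 (wstar \<bullet> x i) (y i)
         - l2 (wstar \<bullet> x i) (y i) * (wm \<bullet> x i - wstar \<bullet> x i)) *\<^sub>R x i)"
      by (simp add: GS_def Lin_def g_def wm_def sum_subtractf[symmetric] algebra_simps
          inner_add_left scaleR_diff_left)
    also have "norm \<dots> \<le> (\<Sum>i\<in>S. gam * (norm v)^2)"
    proof (rule sum_norm_le)
      fix i assume iS: "i \<in> S"
      have xi: "norm (x i) \<le> 1" using iS x_bd by (auto simp: S_def)
      have vx: "(wm \<bullet> x i - wstar \<bullet> x i)^2 \<le> (norm v)^2"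
      proof -
        have "\<bar>wm \<bullet> x i - wstar \<bullet> x i\<bar> = \<bar>v \<bullet> x i\<bar>" by (simp add: wm_def inner_add_left)
        also have "\<dots> \<le> norm v * norm (x i)" by (rule Cauchy_Schwarz_ineq2)
        also have "\<dots> \<le> norm v" using xi by (simp add: mult_left_le)
        finally show ?thesis by (metis abs_le_square_iff abs_norm_cancel)
      qed
      have "norm ((l1 (wm \<bullet> x i) (y i) - l1 (wstar \<bullet> x i) (y i)
         - l2 (wstar \<bullet> x i) (y i) * (wm \<bullet> x i - wstar \<bullet> x i)) *\<^sub>R x i)
         \<le> gam * (wm \<bullet> x i - wstar \<bullet> x i)^2 * 1"
        unfolding norm_scaleR
        by (rule mult_mono[OF taylor1[OF d2 lip] xi]) (auto simp: gam0)
      also have "\<dots> \<le> gam * (norm v)^2" using vx gam0 by (simp add: mult_left_mono)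
      finally show "norm ((l1 (wm \<bullet> x i) (y i) - l1 (wstar \<bullet> x i) (y i)
         - l2 (wstar \<bullet> x i) (y i) * (wm \<bullet> x i - wstar \<bullet> x i)) *\<^sub>R x i) \<le> gam * (norm v)^2" .
    qed
    finally show ?thesis using cardS by (simp add: mult_ac)
  qed
  have C0: "C \<ge> 0"
  proof -
    have "(1::nat) \<in> {1..n}" using m_lt by auto
    then show ?thesis using grad_bd[of 1 wstar] norm_ge_zero order_trans by blast
  qed
  have gbd: "\<And>i. i \<in> {1..n} \<Longrightarrow> norm (g wstar i) \<le> C" using grad_bd gi by metis
  have wbd: "lam * norm wstar \<le> C"
  proof -
    have "(lam * real n) *\<^sub>R wstar = - (\<Sum>i\<in>{1..n}. g wstar i)" using full0 by (simp add: eq_neg_iff_add_eq_0 add.commute)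
    then have "lam * real n * norm wstar = norm (\<Sum>i\<in>{1..n}. g wstar i)"
      by (metis norm_minus_cancel norm_scaleR abs_of_nonneg lam_pos of_nat_0_le_iff mult_nonneg_nonneg less_imp_le)
    also have "\<dots> \<le> (\<Sum>i\<in>{1..n}. C)" by (rule sum_norm_le) (auto intro: gbd)
    also have "\<dots> = real n * C" by simp
    finally have "real n * (lam * norm wstar) \<le> real n * C" by (simp add: mult_ac)
    then show ?thesis using m_lt by simp
  qed
  have Dbd: "norm Delta \<le> 2 * real m * C"
  proof -
    have "norm Delta \<le> norm ((real m * lam) *\<^sub>R wstar) + norm (\<Sum>j\<in>T. g wstar j)"
      unfolding Delta_eq by (rule norm_triangle_ineq)
    also have "norm ((real m * lam) *\<^sub>R wstar) = real m * (lam * norm wstar)"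
      using lam_pos by simp
    also have "\<dots> \<le> real m * C" using wbd by (simp add: mult_left_mono)
    also have "norm (\<Sum>j\<in>T. g wstar j) \<le> (\<Sum>j\<in>T. C)"
      by (rule sum_norm_le) (auto intro!: gbd simp: T_def)
    also have "(\<Sum>j\<in>T. C) = real m * C" using cardT by simp
    finally show ?thesis by (simp add: mult_ac)
  qed
  have part2: "gam * real (n - m) * (norm v)^2 \<le> 4 * gam * (real m)^2 * C^2 / (lam^2 * real (n - m))"
  proof -
    have "c * norm v \<le> 2 * real m * C" using Lin_lb[of v] LinV Dbd by simp
    then have sq: "(c * norm v)^2 \<le> (2 * real m * C)^2"
      using c_pos by (intro power_mono) auto
    have nm: "real (n - m) > 0" using m_lt by simp
    have "gam * real (n - m) * (norm v)^2 = gam * (c * norm v)^2 / (lam^2 * real (n - m))"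
      using nm lam_pos by (simp add: c_def power2_eq_square field_simps)
    also have "\<dots> \<le> gam * (2 * real m * C)^2 / (lam^2 * real (n - m))"
      using sq gam0 nm lam_pos by (intro divide_right_mono mult_left_mono) auto
    also have "\<dots> = 4 * gam * (real m)^2 * C^2 / (lam^2 * real (n - m))"
      by (simp add: power2_eq_square)
    finally show ?thesis .
  qed
  show ?thesis
    unfolding Let_def Delta_def[symmetric] H_def[symmetric] v_def[symmetric] wm_def[symmetric] gradS
    using part1 part2 by simp
qed

end
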